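(* Let $\psi\in\mathbf{\Psi}_n$, and $\nu:=(\nu_1,\ldots,\nu_n)\in\mathbb{R}^n$ with $|\!|\!|\nu|\!|\!|_\psi=1$. Then $$\partial|\!|\!|\cdot|\!|\!|_{\psi}(\nu)=\big\{(\tau_1\gamma_1,\ldots,\tau_n\gamma_n)\in\mathbb{R}^n \mid \mu\in\partial\psi(t),\ \gamma_i:=\psi(t)+\langle \mu,\mathbf{e}_i-t\rangle\ge 0,\ \tau_i:={\rm sgn}(\nu_i)\ \text{if}\ \nu_i\ne 0\ \text{and}\ \tau_i\in\{-1,1\}\ \text{if}\ \nu_i=0\ (i=1,\ldots,n)\big\},$$ where $t:=\Big(\frac{|\nu_1|}{\sum_{i=1}^{n}|\nu_i|},\ldots,\frac{|\nu_n|}{\sum_{i=1}^{n}|\nu_i|}\Big)$.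
   Context: $\Omega_n:=\{t\in\mathbb{R}^n\mid t_i\ge0,\ \sum_i t_i=1\}$, $\Omega_n^\circ:=\{t\in\Omega_n\mid t_i<1\ \forall i\}$, $\mathbf{e}_i$ the standard unit vectors. $\mathbf{\Psi}_n$ is the class of convex continuous $\psi:\Omega_n\to\mathbb{R}$ with (B1) $\psi(\mathbf{e}_i)=1$ for all $i$ and (B2) $\psi(t)\ge(1-t_i)\psi\big(\frac{t_1}{1-t_i},\ldots,\frac{t_{i-1}}{1-t_i},0,\frac{t_{i+1}}{1-t_i},\ldots,\frac{t_n}{1-t_i}\big)$ for all $t\in\Omega_n^\circ$, $i=1,\ldots,n$. Here $|\!|\!|\cdot|\!|\!|_\psi$ is the norm on $\mathbb{R}^n$ given by $|\!|\!|\nu|\!|\!|_\psi:=\big(\sum_i|\nu_i|\big)\psi\big(\frac{|\nu_1|}{\sum_i|\nu_i|},\ldots,\frac{|\nu_n|}{\sum_i|\nu_i|}\big)$ for $\nu\ne0$ and $0$ at $0$. $\partial$ denotes the convex subdifferential (for $\psi$, the subdifferential of the convex function on $\Omega_n$); ${\rm sgn}$ is the sign function. *)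

theory Defs
  imports "HOL-Analysis.Analysis"
begin

definition simplex_Omega :: "(real ^ 'n) set" where
  "simplex_Omega = {t. (\<forall>i. t $ i \<ge> 0) \<and> (\<Sum>i\<in>UNIV. t $ i) = 1}"

definition simplex_Omega_int :: "(real ^ 'n) set" where
  "simplex_Omega_int = {t \<in> simplex_Omega. \<forall>i. t $ i < 1}"

definition Psi_class :: "((real ^ 'n) \<Rightarrow> real) set" where
  "Psi_class = {\<psi>. convex_on simplex_Omega \<psi> \<and> continuous_on simplex_Omega \<psi>
      \<and> (\<forall>i. \<psi> (axis i 1) = 1)
      \<and> (\<forall>t\<in>simplex_Omega_int. \<forall>i.
            \<psi> t \<ge> (1 - t $ i) * \<psi> (\<chi> j. if j = i then 0 else t $ j / (1 - t $ i)))}"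

definition abs_normalize :: "real ^ 'n \<Rightarrow> real ^ 'n" where
  "abs_normalize \<nu> = (\<chi> i. \<bar>\<nu> $ i\<bar> / (\<Sum>j\<in>UNIV. \<bar>\<nu> $ j\<bar>))"

definition psi_norm :: "((real ^ 'n) \<Rightarrow> real) \<Rightarrow> real ^ 'n \<Rightarrow> real" where
  "psi_norm \<psi> \<nu> = (if \<nu> = 0 then 0
     else (\<Sum>i\<in>UNIV. \<bar>\<nu> $ i\<bar>) * \<psi> (abs_normalize \<nu>))"

definition subdiff_on :: "(real ^ 'n) set \<Rightarrow> ((real ^ 'n) \<Rightarrow> real) \<Rightarrow> real ^ 'n \<Rightarrow> (real ^ 'n) set" where
  "subdiff_on D f x = {\<mu>. \<forall>y\<in>D. f y \<ge> f x + \<mu> \<bullet> (y - x)}"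

end

theory Submission
  imports Defs
begin

lemma inner_cart: "(x::real^'n) \<bullet> y = (\<Sum>i\<in>UNIV. x $ i * y $ i)"
  by (simp add: inner_vec_def)

lemma inner_axis_diff: "(\<mu>::real^'n) \<bullet> (axis i 1 - t) = \<mu> $ i - \<mu> \<bullet> t"
  by (simp add: inner_diff_right inner_axis)

lemma S_pos:
  assumes "(y::real^'n) \<noteq> 0"
  shows "(\<Sum>j\<in>UNIV. \<bar>y $ j\<bar>) > 0"
proof -
  obtain i where "y $ i \<noteq> 0" using assms by (metis vec_eq_iff zero_index)
  then have "0 < \<bar>y $ i\<bar>" by simp
  also have "\<dots> \<le> (\<Sum>j\<in>UNIV. \<bar>y $ j\<bar>)"
    by (rule member_le_sum) auto
  finally show ?thesis .
qed

lemma absn_simplex: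
  assumes "(y::real^'n) \<noteq> 0"
  shows "abs_normalize y \<in> simplex_Omega"
proof -
  have S: "(\<Sum>j\<in>UNIV. \<bar>y $ j\<bar>) > 0" using S_pos[OF assms] .
  have "(\<Sum>i\<in>UNIV. \<bar>y $ i\<bar> / (\<Sum>j\<in>UNIV. \<bar>y $ j\<bar>)) = 1"
    using S by (simp add: sum_divide_distrib[symmetric])
  then show ?thesis using S
    by (simp add: simplex_Omega_def abs_normalize_def)
qed

lemma abs_component:
  assumes "(y::real^'n) \<noteq> 0"
  shows "\<bar>y $ i\<bar> = (\<Sum>j\<in>UNIV. \<bar>y $ j\<bar>) * abs_normalize y $ i"
  using S_pos[OF assms] by (simp add: abs_normalize_def)

lemma psi_norm_simplex:
  assumes "u \<in> simplex_Omega" and "\<And>i. \<bar>(y::real^'n) $ i\<bar> = u $ i"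
  shows "psi_norm \<psi> y = \<psi> u"
proof -
  have s1: "(\<Sum>j\<in>UNIV. \<bar>y $ j\<bar>) = 1" using assms by (simp add: simplex_Omega_def)
  then have "y \<noteq> 0" by auto
  moreover have "abs_normalize y = u" using s1 assms(2)
    by (simp add: abs_normalize_def vec_eq_iff)
  ultimately show ?thesis using s1 by (simp add: psi_norm_def)
qed

lemma gamma_sum:
  assumes "(\<Sum>i\<in>UNIV. u $ i) = 1"
  shows "(\<Sum>i\<in>UNIV. (c + (\<mu>::real^'n) $ i - d) * u $ i) = c + \<mu> \<bullet> u - d"
proof -
  have "(\<Sum>i\<in>UNIV. (c + \<mu> $ i - d) * u $ i)
      = c * (\<Sum>i\<in>UNIV. u $ i) + (\<Sum>i\<in>UNIV. \<mu> $ i * u $ i) - d * (\<Sum>i\<in>UNIV. u $ i)"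
    by (simp add: algebra_simps sum.distrib sum_subtractf sum_distrib_left)
  then show ?thesis using assms by (simp add: inner_cart)
qed

theorem lemma4p1:
  fixes \<psi> :: "real ^ 'n \<Rightarrow> real" and \<nu> :: "real ^ 'n"
  assumes "\<psi> \<in> Psi_class"
    and "psi_norm \<psi> \<nu> = 1"
  shows "subdiff_on UNIV (psi_norm \<psi>) \<nu> =
    {(\<chi> i. \<tau> i * (\<psi> (abs_normalize \<nu>) + \<mu> \<bullet> (axis i 1 - abs_normalize \<nu>))) | \<mu> \<tau>.
       \<mu> \<in> subdiff_on simplex_Omega \<psi> (abs_normalize \<nu>)
       \<and> (\<forall>i. \<psi> (abs_normalize \<nu>) + \<mu> \<bullet> (axis i 1 - abs_normalize \<nu>) \<ge> 0)
       \<and> (\<forall>i. (\<nu> $ i \<noteq> 0 \<longrightarrow> \<tau> i = sgn (\<nu> $ i))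
             \<and> (\<nu> $ i = 0 \<longrightarrow> \<tau> i \<in> {-1, 1}))}"
proof -
  define t where "t = abs_normalize \<nu>"
  define s where "s = (\<Sum>j\<in>UNIV. \<bar>\<nu> $ j\<bar>)"
  have nz: "\<nu> \<noteq> 0" using assms(2) by (auto simp: psi_norm_def)
  have spos: "s > 0" using S_pos[OF nz] by (simp add: s_def)
  have tS: "t \<in> simplex_Omega" using absn_simplex[OF nz] by (simp add: t_def)
  have tsum: "(\<Sum>i\<in>UNIV. t $ i) = 1" using tS by (simp add: simplex_Omega_def)
  have nuabs: "\<And>i. \<bar>\<nu> $ i\<bar> = s * t $ i" unfolding s_def t_def by (rule abs_component[OF nz])
  have spsi: "s * \<psi> t = 1" using assms(2) nz by (simp add: psi_norm_def s_def t_def)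
  show ?thesis
  proof (rule set_eqI, rule iffI)
    fix g assume "g \<in> subdiff_on UNIV (psi_norm \<psi>) \<nu>"
    then have sub: "\<And>y. psi_norm \<psi> y \<ge> 1 + g \<bullet> (y - \<nu>)"
      using assms(2) by (simp add: subdiff_on_def)
    have "psi_norm \<psi> 0 \<ge> 1 + g \<bullet> (0 - \<nu>)" by (rule sub)
    then have gnu1: "g \<bullet> \<nu> \<ge> 1" by (simp add: psi_norm_def inner_diff_right)
    have n2: "psi_norm \<psi> (2 *\<^sub>R \<nu>) = 2"
    proof -
      have "abs_normalize (2 *\<^sub>R \<nu>) = abs_normalize \<nu>"
        by (simp add: abs_normalize_def vec_eq_iff abs_mult sum_distrib_left[symmetric])
      moreover have "(\<Sum>j\<in>UNIV. \<bar>(2 *\<^sub>R \<nu>) $ j\<bar>) = 2 * s"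
        by (simp add: s_def abs_mult sum_distrib_left)
      ultimately show ?thesis using nz spsi by (simp add: psi_norm_def t_def)
    qed
    have "psi_norm \<psi> (2 *\<^sub>R \<nu>) \<ge> 1 + g \<bullet> (2 *\<^sub>R \<nu> - \<nu>)" by (rule sub)
    then have "g \<bullet> \<nu> \<le> 1" using n2 by (simp add: inner_diff_right)
    with gnu1 have gnu: "g \<bullet> \<nu> = 1" by simp
    have dual: "\<And>y. psi_norm \<psi> y \<ge> g \<bullet> y"
      using sub gnu by (simp add: inner_diff_right)
    define h where "h = (\<chi> i. \<bar>g $ i\<bar>)"
    have hu: "\<psi> u \<ge> h \<bullet> u" if uS: "u \<in> simplex_Omega" for u
    proof -
      define y where "y = (\<chi> i. if g $ i < 0 then - u $ i else u $ i)"
      have u0: "\<And>i. u $ i \<ge> 0" using uS by (simp add: simplex_Omega_def)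
      have "psi_norm \<psi> y = \<psi> u"
        by (rule psi_norm_simplex[OF uS]) (simp add: y_def u0)
      moreover have "g \<bullet> y = h \<bullet> u"
        by (simp add: inner_cart y_def h_def; rule sum.cong; auto)
      ultimately show ?thesis using dual[of y] by simp
    qed
    have "h \<bullet> t \<le> \<psi> t" using hu[OF tS] .
    have le: "\<And>i. g $ i * \<nu> $ i \<le> \<bar>g $ i\<bar> * \<bar>\<nu> $ i\<bar>"
      by (metis abs_ge_self abs_mult)
    have eqsum: "(\<Sum>i\<in>UNIV. \<bar>g $ i\<bar> * \<bar>\<nu> $ i\<bar>) = s * (h \<bullet> t)"
      by (simp add: inner_cart h_def nuabs sum_distrib_left algebra_simps)
    have "s * (h \<bullet> t) \<le> s * \<psi> t" using \<open>h \<bullet> t \<le> \<psi> t\<close> spos by simp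
    then have A: "(\<Sum>i\<in>UNIV. \<bar>g $ i\<bar> * \<bar>\<nu> $ i\<bar>) \<le> (\<Sum>i\<in>UNIV. g $ i * \<nu> $ i)"
      using eqsum spsi gnu inner_cart[of g \<nu>] \<open>s * (h \<bullet> t) \<le> s * \<psi> t\<close> by linarith
    have B: "(\<Sum>i\<in>UNIV. \<bar>g $ i\<bar> * \<bar>\<nu> $ i\<bar> - g $ i * \<nu> $ i) = 0"
    proof -
      have "(\<Sum>i\<in>UNIV. \<bar>g $ i\<bar> * \<bar>\<nu> $ i\<bar> - g $ i * \<nu> $ i) \<ge> 0"
        using le by (simp add: sum_nonneg)
      then show ?thesis using A by (simp add: sum_subtractf)
    qed
    have eqi: "\<And>i. g $ i * \<nu> $ i = \<bar>g $ i\<bar> * \<bar>\<nu> $ i\<bar>"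
    proof -
      fix i
      have "\<forall>i\<in>UNIV. \<bar>g $ i\<bar> * \<bar>\<nu> $ i\<bar> - g $ i * \<nu> $ i = 0"
        using B sum_nonneg_eq_0_iff[of UNIV "\<lambda>i. \<bar>g $ i\<bar> * \<bar>\<nu> $ i\<bar> - g $ i * \<nu> $ i"] le
        by simp
      then show "g $ i * \<nu> $ i = \<bar>g $ i\<bar> * \<bar>\<nu> $ i\<bar>" by simp
    qed
    have C: "(\<Sum>i\<in>UNIV. g $ i * \<nu> $ i) \<le> (\<Sum>i\<in>UNIV. \<bar>g $ i\<bar> * \<bar>\<nu> $ i\<bar>)"
      by (rule sum_mono) (rule le)
    then have "s * \<psi> t \<le> s * (h \<bullet> t)" using C eqsum spsi gnu inner_cart[of g \<nu>] by linarith
    then have "\<psi> t \<le> h \<bullet> t" using spos by simp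
    then have htpsi: "h \<bullet> t = \<psi> t"
      using \<open>h \<bullet> t \<le> \<psi> t\<close> by linarith
    define \<tau> where "\<tau> = (\<lambda>i. if \<nu> $ i \<noteq> 0 then sgn (\<nu> $ i) else if g $ i < 0 then -1 else (1::real))"
    have gam: "\<And>i. \<psi> t + h \<bullet> (axis i 1 - t) = \<bar>g $ i\<bar>"
      using htpsi by (simp add: inner_axis_diff h_def)
    have gi: "g $ i = \<tau> i * \<bar>g $ i\<bar>" for i
    proof (cases "\<nu> $ i = 0")
      case True then show ?thesis by (simp add: \<tau>_def)
    next
      case False
      have e: "g $ i * \<nu> $ i = \<bar>g $ i\<bar> * \<bar>\<nu> $ i\<bar>" by (rule eqi)
      show ?thesis
      proof (cases "\<nu> $ i > 0")
        case True
        then have "g $ i * \<nu> $ i = \<bar>g $ i\<bar> * \<nu> $ i" using e by simp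
        then have "g $ i = \<bar>g $ i\<bar>" using True by simp
        then show ?thesis using True by (simp add: \<tau>_def)
      next
        case F2: False
        then have neg: "\<nu> $ i < 0" using False by simp
        then have "g $ i * \<nu> $ i = (- \<bar>g $ i\<bar>) * \<nu> $ i" using e by simp
        then have "(g $ i + \<bar>g $ i\<bar>) * \<nu> $ i = 0" by (simp add: algebra_simps)
        then have "g $ i = - \<bar>g $ i\<bar>" using neg by simp
        then show ?thesis using neg by (simp add: \<tau>_def)
      qed
    qed
    show "g \<in> {(\<chi> i. \<tau> i * (\<psi> (abs_normalize \<nu>) + \<mu> \<bullet> (axis i 1 - abs_normalize \<nu>))) | \<mu> \<tau>.
       \<mu> \<in> subdiff_on simplex_Omega \<psi> (abs_normalize \<nu>)
       \<and> (\<forall>i. \<psi> (abs_normalize \<nu>) + \<mu> \<bullet> (axis i 1 - abs_normalize \<nu>) \<ge> 0)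
       \<and> (\<forall>i. (\<nu> $ i \<noteq> 0 \<longrightarrow> \<tau> i = sgn (\<nu> $ i))
             \<and> (\<nu> $ i = 0 \<longrightarrow> \<tau> i \<in> {-1, 1}))}"
    proof (intro CollectI exI conjI allI impI)
      show "g = (\<chi> i. \<tau> i * (\<psi> (abs_normalize \<nu>) + h \<bullet> (axis i 1 - abs_normalize \<nu>)))"
        using gi gam by (simp add: vec_eq_iff t_def[symmetric])
      show "h \<in> subdiff_on simplex_Omega \<psi> (abs_normalize \<nu>)"
        using hu htpsi by (simp add: subdiff_on_def t_def[symmetric] inner_diff_right)
      fix i
      show "0 \<le> \<psi> (abs_normalize \<nu>) + h \<bullet> (axis i 1 - abs_normalize \<nu>)"
        using gam[of i] by (simp add: t_def[symmetric])
      show "\<tau> i = sgn (\<nu> $ i)" if "\<nu> $ i \<noteq> 0" using that by (simp add: \<tau>_def)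
      show "\<tau> i \<in> {-1, 1}" if "\<nu> $ i = 0" using that by (simp add: \<tau>_def)
    qed
  next
    fix g assume "g \<in> {(\<chi> i. \<tau> i * (\<psi> (abs_normalize \<nu>) + \<mu> \<bullet> (axis i 1 - abs_normalize \<nu>))) | \<mu> \<tau>.
       \<mu> \<in> subdiff_on simplex_Omega \<psi> (abs_normalize \<nu>)
       \<and> (\<forall>i. \<psi> (abs_normalize \<nu>) + \<mu> \<bullet> (axis i 1 - abs_normalize \<nu>) \<ge> 0)
       \<and> (\<forall>i. (\<nu> $ i \<noteq> 0 \<longrightarrow> \<tau> i = sgn (\<nu> $ i))
             \<and> (\<nu> $ i = 0 \<longrightarrow> \<tau> i \<in> {-1, 1}))}"
    then obtain \<mu> \<tau> where gdef: "g = (\<chi> i. \<tau> i * (\<psi> t + \<mu> \<bullet> (axis i 1 - t)))"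
      and msub: "\<mu> \<in> subdiff_on simplex_Omega \<psi> t"
      and gpos: "\<And>i. \<psi> t + \<mu> \<bullet> (axis i 1 - t) \<ge> 0"
      and tau1: "\<And>i. \<nu> $ i \<noteq> 0 \<Longrightarrow> \<tau> i = sgn (\<nu> $ i)"
      and tau2: "\<And>i. \<nu> $ i = 0 \<Longrightarrow> \<tau> i \<in> {-1, 1}"
      by (auto simp: t_def)
    define \<gamma> where "\<gamma> = (\<lambda>i. \<psi> t + \<mu> $ i - \<mu> \<bullet> t)"
    have gam: "\<And>i. \<psi> t + \<mu> \<bullet> (axis i 1 - t) = \<gamma> i"
      by (simp add: inner_axis_diff \<gamma>_def)
    have g0: "\<And>i. \<gamma> i \<ge> 0" using gpos gam by metis
    have gi: "\<And>i. g $ i = \<tau> i * \<gamma> i" by (simp add: gdef gam)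
    have tabs: "\<And>i. \<bar>\<tau> i\<bar> = 1"
    proof -
      fix i show "\<bar>\<tau> i\<bar> = 1"
        using tau1[of i] tau2[of i] by (cases "\<nu> $ i = 0") (auto simp: sgn_if)
    qed
    have tnu: "\<And>i. \<tau> i * \<nu> $ i = \<bar>\<nu> $ i\<bar>"
    proof -
      fix i show "\<tau> i * \<nu> $ i = \<bar>\<nu> $ i\<bar>"
        using tau1[of i] by (cases "\<nu> $ i = 0") (auto simp: sgn_mult_self_eq abs_sgn mult.commute)
    qed
    have "g \<bullet> \<nu> = (\<Sum>i\<in>UNIV. \<gamma> i * \<bar>\<nu> $ i\<bar>)"
      by (simp add: inner_cart gi tnu[symmetric] algebra_simps)
    also have "\<dots> = s * (\<Sum>i\<in>UNIV. (\<psi> t + \<mu> $ i - \<mu> \<bullet> t) * t $ i)"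
      by (simp add: nuabs \<gamma>_def sum_distrib_left algebra_simps)
    also have "\<dots> = 1" using gamma_sum[OF tsum] spsi by simp
    finally have gnu: "g \<bullet> \<nu> = 1" .
    have dual: "g \<bullet> y \<le> psi_norm \<psi> y" for y
    proof (cases "y = 0")
      case True then show ?thesis by (simp add: psi_norm_def)
    next
      case False
      define S where "S = (\<Sum>j\<in>UNIV. \<bar>y $ j\<bar>)"
      define u where "u = abs_normalize y"
      have uS: "u \<in> simplex_Omega" using absn_simplex[OF False] by (simp add: u_def)
      have usum: "(\<Sum>i\<in>UNIV. u $ i) = 1" using uS by (simp add: simplex_Omega_def)
      have Spos: "S > 0" using S_pos[OF False] by (simp add: S_def)
      have yabs: "\<And>i. \<bar>y $ i\<bar> = S * u $ i" unfolding S_def u_def by (rule abs_component[OF False])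
      have "g \<bullet> y = (\<Sum>i\<in>UNIV. \<tau> i * \<gamma> i * y $ i)" by (simp add: inner_cart gi)
      also have "\<dots> \<le> (\<Sum>i\<in>UNIV. \<gamma> i * \<bar>y $ i\<bar>)"
      proof (rule sum_mono)
        fix i
        have "\<tau> i * \<gamma> i * y $ i \<le> \<bar>\<tau> i * \<gamma> i * y $ i\<bar>" by simp
        also have "\<dots> = \<gamma> i * \<bar>y $ i\<bar>" using tabs[of i] g0[of i] by (simp add: abs_mult)
        finally show "\<tau> i * \<gamma> i * y $ i \<le> \<gamma> i * \<bar>y $ i\<bar>" .
      qed
      also have "\<dots> = S * (\<Sum>i\<in>UNIV. (\<psi> t + \<mu> $ i - \<mu> \<bullet> t) * u $ i)"
        by (simp add: yabs \<gamma>_def sum_distrib_left algebra_simps)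
      also have "\<dots> = S * (\<psi> t + \<mu> \<bullet> u - \<mu> \<bullet> t)" using gamma_sum[OF usum] by simp
      also have "\<dots> \<le> S * \<psi> u"
      proof -
        have "\<psi> u \<ge> \<psi> t + \<mu> \<bullet> (u - t)" using msub uS by (simp add: subdiff_on_def)
        then show ?thesis using Spos by (simp add: inner_diff_right)
      qed
      also have "\<dots> = psi_norm \<psi> y" using False by (simp add: psi_norm_def S_def u_def)
      finally show ?thesis .
    qed
    show "g \<in> subdiff_on UNIV (psi_norm \<psi>) \<nu>"
      using dual gnu assms(2) by (simp add: subdiff_on_def inner_diff_right)
  qed
qed

end
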